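(* (1) Every cograph is equivalent to a fat intersection cograph. (2a) Every finite cograph is equivalent to an inner product cograph. (2b) Every finite cograph is equivalent to a polynomial cograph. (3) Every finite cograph is equivalent to a geometric cograph in $\mathbb{R}^d$ for some (sufficiently large) $d$.
   Context: A cograph is a function $\mathcal{C}:\mathcal{P}^{(2)}\to\mathcal{E}$, where $\mathcal{P}$ is a set ("points"), $\mathcal{P}^{(2)}$ is the set of unordered pairs of distinct points, and $\mathcal{E}$ is a set ("edges"); one writes $\mathcal{C}(P,Q)$ for the value on $\{P,Q\}$. It is finite if $\mathcal{P}$ is finite. Two cographs $\mathcal{C}$ on $\mathcal{P}$ and $\mathcal{C}'$ on $\mathcal{P}'$ are equivalent if there is a bijection $\varphi:\mathcal{P}\to\mathcal{P}'$ such that for all pairs of distinct points, $\mathcal{C}(P,Q)=\mathcal{C}(R,S)$ iff $\mathcal{C}'(\varphi P,\varphi Q)=\mathcal{C}'(\varphi R,\varphi S)$ (i.e. cographs are considered up to relabeling points and edges). A fat intersection cograph is given by a collection $\mathcal{P}$ of distinct sets (the points) and a collection $\mathcal{S}$ of sets closed under intersection and containing $U=\bigcup_{P\in\mathcal{P}}P$; its edge $\mathcal{C}(P,Q)$ is the smallest set in $\mathcal{S}$ containing $P\cap Q$. An inner product cograph has as points distinct vectors of a real inner product space, with $\mathcal{C}(P,Q)=(P,Q)$ the inner product. A polynomial cograph has as points distinct elements of $\mathbb{Z}$ (or of $\mathbb{Z}_m$ for some $m$), with $\mathcal{C}(P,Q)=f(P,Q)$ for a fixed symmetric polynomial $f$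 in two variables with integer coefficients. A geometric cograph in $\mathbb{R}^d$ has as points distinct points of $\mathbb{R}^d$, with $\mathcal{C}(P,Q)$ the Euclidean distance between $P$ and $Q$. *)

theory Defs
  imports Complex_Main
begin

text \<open>A cograph is represented by a set of points Pts and a function C giving the
  edge of each pair of distinct points; C is required to be symmetric on distinct
  points of Pts, so that it is a function on unordered pairs of distinct points.
  Values of C on pairs (P,P) or outside Pts are irrelevant.\<close>

definition is_cograph :: "'p set \<Rightarrow> ('p \<Rightarrow> 'p \<Rightarrow> 'e) \<Rightarrow> bool" where
  "is_cograph Pts C \<longleftrightarrow> (\<forall>P\<in>Pts. \<forall>Q\<in>Pts. P \<noteq> Q \<longrightarrow> C P Q = C Q P)"

definition cograph_equiv ::
  "'p set \<Rightarrow> ('p \<Rightarrow> 'p \<Rightarrow> 'e) \<Rightarrow> 'q set \<Rightarrow> ('q \<Rightarrow> 'q \<Rightarrow> 'f) \<Rightarrow> bool" where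
  "cograph_equiv Pts C Pts' C' \<longleftrightarrow>
     (\<exists>\<phi>. bij_betw \<phi> Pts Pts' \<and>
       (\<forall>P\<in>Pts. \<forall>Q\<in>Pts. \<forall>R\<in>Pts. \<forall>S\<in>Pts. P \<noteq> Q \<longrightarrow> R \<noteq> S \<longrightarrow>
          (C P Q = C R S \<longleftrightarrow> C' (\<phi> P) (\<phi> Q) = C' (\<phi> R) (\<phi> S))))"

text \<open>The edge of P, Q is the smallest member of S containing
  P \<inter> Q, i.e. the intersection of all members of S containing P \<inter> Q.\<close>

definition fat_intersection_system :: "'u set set \<Rightarrow> 'u set set \<Rightarrow> bool" where
  "fat_intersection_system V S \<longleftrightarrow>
     \<Union>V \<in> S \<and> (\<forall>T. T \<subseteq> S \<longrightarrow> T \<noteq> {} \<longrightarrow> \<Inter>T \<in> S)"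

definition fat_edge :: "'u set set \<Rightarrow> 'u set \<Rightarrow> 'u set \<Rightarrow> 'u set" where
  "fat_edge S P Q = \<Inter>{A \<in> S. P \<inter> Q \<subseteq> A}"

text \<open>Standard inner product and Euclidean distance on R^d, with vectors represented
  as functions nat \<Rightarrow> real vanishing at coordinates \<ge> d.\<close>

definition in_Rd :: "nat \<Rightarrow> (nat \<Rightarrow> real) \<Rightarrow> bool" where
  "in_Rd d x \<longleftrightarrow> (\<forall>i\<ge>d. x i = 0)"

definition inner_Rd :: "nat \<Rightarrow> (nat \<Rightarrow> real) \<Rightarrow> (nat \<Rightarrow> real) \<Rightarrow> real" where
  "inner_Rd d x y = (\<Sum>i<d. x i * y i)"

definition dist_Rd :: "nat \<Rightarrow> (nat \<Rightarrow> real) \<Rightarrow> (nat \<Rightarrow> real) \<Rightarrow> real" where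
  "dist_Rd d x y = sqrt (\<Sum>i<d. (x i - y i)^2)"

text \<open>It is symmetric iff its coefficient array is symmetric.\<close>

definition poly2 :: "(nat \<Rightarrow> nat \<Rightarrow> int) \<Rightarrow> nat \<Rightarrow> int \<Rightarrow> int \<Rightarrow> int" where
  "poly2 a n x y = (\<Sum>i\<le>n. \<Sum>j\<le>n. a i j * x ^ i * y ^ j)"

definition symmetric_coeffs :: "(nat \<Rightarrow> nat \<Rightarrow> int) \<Rightarrow> bool" where
  "symmetric_coeffs a \<longleftrightarrow> (\<forall>i j. a i j = a j i)"

end

theory Submission
  imports Defs "HOL-Library.Nat_Bijection" "HOL-Number_Theory.Number_Theory" "HOL-Computational_Algebra.Polynomial"
begin


lemma equiv_code:
  assumes bij: "bij_betw \<phi> Pts V"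
    and inj: "inj_on c {C P Q | P Q. P \<in> Pts \<and> Q \<in> Pts \<and> P \<noteq> Q}"
    and val: "\<And>P Q. P \<in> Pts \<Longrightarrow> Q \<in> Pts \<Longrightarrow> P \<noteq> Q \<Longrightarrow> C' (\<phi> P) (\<phi> Q) = c (C P Q)"
  shows "cograph_equiv Pts C V C'"
  unfolding cograph_equiv_def
proof (intro exI conjI ballI impI)
  show "bij_betw \<phi> Pts V" by fact
  fix P Q R S assume h: "P \<in> Pts" "Q \<in> Pts" "R \<in> Pts" "S \<in> Pts" "P \<noteq> Q" "R \<noteq> S"
  have "c (C P Q) = c (C R S) \<longleftrightarrow> C P Q = C R S"
  proof -
    have "C P Q \<in> {C P Q | P Q. P \<in> Pts \<and> Q \<in> Pts \<and> P \<noteq> Q}"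
         "C R S \<in> {C P Q | P Q. P \<in> Pts \<and> Q \<in> Pts \<and> P \<noteq> Q}" using h by blast+
    then show ?thesis using inj_on_eq_iff[OF inj] by blast
  qed
  then show "(C P Q = C R S) = (C' (\<phi> P) (\<phi> Q) = C' (\<phi> R) (\<phi> S))"
    using val h by simp
qed

lemma part1:
  fixes Pts :: "'p set" and C :: "'p \<Rightarrow> 'p \<Rightarrow> 'e"
  assumes cg: "is_cograph Pts C"
  shows "\<exists>(V :: 'p set set set) (S :: 'p set set set).
        fat_intersection_system V S \<and> cograph_equiv Pts C V (fat_edge S)"
proof -
  define \<phi> where "\<phi> P = {{P,R} | R. R \<in> Pts}" for P
  define E where "E c = {{R,S} | R S. R \<in> Pts \<and> S \<in> Pts \<and> R \<noteq> S \<and> C R S = c}" for c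
  define V where "V = \<phi> ` Pts"
  define S where "S = insert (\<Union>V) (insert {} (range E))"
  have symC: "\<And>P Q. P\<in>Pts \<Longrightarrow> Q\<in>Pts \<Longrightarrow> P\<noteq>Q \<Longrightarrow> C P Q = C Q P"
    using cg unfolding is_cograph_def by blast
  have memE: "{P,Q} \<in> E c \<longleftrightarrow> C P Q = c" if "P\<in>Pts" "Q\<in>Pts" "P\<noteq>Q" for P Q c
  proof
    assume "{P,Q} \<in> E c"
    then obtain R S where "{P,Q} = {R,S}" "R \<in> Pts" "S \<in> Pts" "R \<noteq> S" "C R S = c"
      unfolding E_def by blast
    then show "C P Q = c" using symC that by (auto simp: doubleton_eq_iff)
  next
    assume "C P Q = c" then show "{P,Q} \<in> E c" unfolding E_def using that by blast
  qed
  have Esub: "E c \<subseteq> \<Union>V" for c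
    unfolding E_def V_def \<phi>_def by blast
  have Edisj: "E c1 \<inter> E c2 = {}" if "c1 \<noteq> c2" for c1 c2
  proof (rule ccontr)
    assume "E c1 \<inter> E c2 \<noteq> {}"
    then obtain X where X: "X \<in> E c1" "X \<in> E c2" by blast
    then obtain R S where RS: "X = {R,S}" "R \<in> Pts" "S \<in> Pts" "R \<noteq> S" "C R S = c1"
      unfolding E_def by blast
    then have "C R S = c2" using memE X by blast
    then show False using RS that by simp
  qed
  have fis: "fat_intersection_system V S"
    unfolding fat_intersection_system_def
  proof (intro conjI allI impI)
    show "\<Union>V \<in> S" unfolding S_def by simp
    fix T assume T: "T \<subseteq> S" "T \<noteq> {}"
    show "\<Inter>T \<in> S"
    proof (cases "T \<subseteq> {\<Union>V}")
      case True
      then have "T = {\<Union>V}" using T by blast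
      then show ?thesis unfolding S_def by simp
    next
      case False
      then obtain A where A: "A \<in> T" "A \<noteq> \<Union>V" by blast
      then have "A = {} \<or> (\<exists>c. A = E c)" using T unfolding S_def by blast
      then show ?thesis
      proof
        assume "A = {}"
        then have "\<Inter>T = {}" using A by blast
        then show ?thesis unfolding S_def by simp
      next
        assume "\<exists>c. A = E c"
        then obtain c where c: "A = E c" by blast
        show ?thesis
        proof (cases "\<forall>B\<in>T. E c \<subseteq> B")
          case True
          then have "\<Inter>T = E c" using A c by blast
          then show ?thesis unfolding S_def by simp
        next
          case False
          then obtain B where B: "B \<in> T" "\<not> E c \<subseteq> B" by blast
          then have "B = {} \<or> (\<exists>c'. B = E c' \<and> c' \<noteq> c)" using T Esub unfolding S_def by blast
          then have "B \<inter> E c = {}" using Edisj by blast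
          then have "\<Inter>T = {}" using A B c by blast
          then show ?thesis unfolding S_def by simp
        qed
      qed
    qed
  qed
  have inj: "inj_on \<phi> Pts"
  proof (rule inj_onI)
    fix P Q assume "P \<in> Pts" "Q \<in> Pts" "\<phi> P = \<phi> Q"
    then have "{P} \<in> \<phi> Q" unfolding \<phi>_def by blast
    then show "P = Q" unfolding \<phi>_def by (auto simp: doubleton_eq_iff)
  qed
  have int: "\<phi> P \<inter> \<phi> Q = {{P,Q}}" if "P\<in>Pts" "Q\<in>Pts" "P\<noteq>Q" for P Q
    using that unfolding \<phi>_def by (auto simp: doubleton_eq_iff)
  have edge: "fat_edge S (\<phi> P) (\<phi> Q) = E (C P Q)" if "P\<in>Pts" "Q\<in>Pts" "P\<noteq>Q" for P Q
  proof -
    have "{A \<in> S. \<phi> P \<inter> \<phi> Q \<subseteq> A} = {\<Union>V, E (C P Q)}"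
    proof -
      have "{P,Q} \<in> \<Union>V" unfolding V_def \<phi>_def using that by blast
      then show ?thesis using int[OF that] memE[OF that] unfolding S_def by auto
    qed
    then show ?thesis unfolding fat_edge_def using Esub[of "C P Q"] by (simp add: Int_absorb1)
  qed
  have injE: "inj_on E {C P Q | P Q. P \<in> Pts \<and> Q \<in> Pts \<and> P \<noteq> Q}"
  proof (rule inj_onI)
    fix x y assume "x \<in> {C P Q | P Q. P \<in> Pts \<and> Q \<in> Pts \<and> P \<noteq> Q}" "E x = E y"
    then obtain P Q where "P \<in> Pts" "Q \<in> Pts" "P \<noteq> Q" "x = C P Q" "{P,Q} \<in> E y"
      using memE by blast
    then show "x = y" using memE by blast
  qed
  have "cograph_equiv Pts C V (fat_edge S)"
    by (rule equiv_code[where \<phi>=\<phi> and c=E]) (use inj injE edge in \<open>auto simp: V_def bij_betw_def\<close>)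
  then show ?thesis using fis by blast
qed



lemma stepA:
  fixes Pts :: "'p set" and G :: "'p \<Rightarrow> 'p \<Rightarrow> real"
  assumes fin: "finite Pts"
    and symG: "\<And>P Q. P\<in>Pts \<Longrightarrow> Q\<in>Pts \<Longrightarrow> P\<noteq>Q \<Longrightarrow> G P Q = G Q P"
  shows "\<exists>d u. (\<forall>P\<in>Pts. in_Rd d (u P)) \<and>
     (\<forall>P\<in>Pts. \<forall>Q\<in>Pts. P\<noteq>Q \<longrightarrow> inner_Rd d (u P) (u Q) = G P Q)"
proof -
  obtain \<iota> :: "'p \<Rightarrow> nat" where bij: "bij_betw \<iota> Pts {0..<card Pts}"
    using ex_bij_betw_finite_nat[OF fin] by blast
  then have inj: "inj_on \<iota> Pts" by (simp add: bij_betw_def)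
  define h where "h = inv_into Pts \<iota>"
  have hi: "h (\<iota> P) = P" if "P \<in> Pts" for P
    unfolding h_def using inj that by (simp add: inv_into_f_f)
  define g where "g a b = G (h a) (h b)" for a b
  define w where "w P = (\<lambda>(a::nat,b::nat). if a < b \<and> a = \<iota> P then 1
      else if a < b \<and> b = \<iota> P then g a b else (0::real))" for P
  define d where "d = Suc (Max (prod_encode ` (\<iota> ` Pts \<times> \<iota> ` Pts)))"
  define u where "u P k = (if k < d then w P (prod_decode k) else 0)" for P k
  have "in_Rd d (u P)" for P unfolding in_Rd_def u_def by simp
  moreover have "inner_Rd d (u P) (u Q) = G P Q" if PQ: "P\<in>Pts" "Q\<in>Pts" "P\<noteq>Q" for P Q
  proof -
    define a0 where "a0 = min (\<iota> P) (\<iota> Q)"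
    define b0 where "b0 = max (\<iota> P) (\<iota> Q)"
    have ne: "\<iota> P \<noteq> \<iota> Q" using inj PQ by (meson inj_on_eq_iff)
    have gab: "g a0 b0 = G P Q"
    proof (cases "\<iota> P < \<iota> Q")
      case True then show ?thesis unfolding a0_def b0_def g_def using hi PQ by simp
    next
      case False then show ?thesis unfolding a0_def b0_def g_def using hi PQ symG ne by simp
    qed
    have key: "w P x * w Q x = (if x = (a0,b0) then G P Q else 0)" for x
    proof -
      obtain a b where x: "x = (a,b)" by fastforce
      show ?thesis unfolding x w_def using ne gab by (auto simp: a0_def b0_def)
    qed
    have lt: "prod_encode (a0,b0) < d"
    proof -
      have "(a0,b0) \<in> \<iota> ` Pts \<times> \<iota> ` Pts" unfolding a0_def b0_def using PQ
        by (auto simp: min_def max_def)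
      then have "prod_encode (a0,b0) \<le> Max (prod_encode ` (\<iota> ` Pts \<times> \<iota> ` Pts))"
        using fin by (intro Max_ge) auto
      then show ?thesis unfolding d_def by simp
    qed
    have "inner_Rd d (u P) (u Q) = (\<Sum>k<d. if k = prod_encode (a0,b0) then G P Q else 0)"
      unfolding inner_Rd_def u_def
    proof (rule sum.cong)
      fix k assume "k \<in> {..<d}"
      then show "(if k < d then w P (prod_decode k) else 0) * (if k < d then w Q (prod_decode k) else 0) =
          (if k = prod_encode (a0, b0) then G P Q else 0)"
      proof -
        have "prod_decode k = (a0,b0) \<longleftrightarrow> k = prod_encode (a0,b0)"
          by (metis prod_decode_inverse prod_encode_inverse)
        then show ?thesis using key[of "prod_decode k"] \<open>k \<in> {..<d}\<close> by auto
      qed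
    qed simp
    also have "\<dots> = G P Q" using lt by simp
    finally show ?thesis .
  qed
  ultimately show ?thesis by blast
qed

lemma inner_self_nonneg: "inner_Rd d v v \<ge> 0"
  unfolding inner_Rd_def by (intro sum_nonneg) simp

lemma stepB:
  fixes Pts :: "'p set" and G :: "'p \<Rightarrow> 'p \<Rightarrow> real"
  assumes fin: "finite Pts"
    and symG: "\<And>P Q. P\<in>Pts \<Longrightarrow> Q\<in>Pts \<Longrightarrow> P\<noteq>Q \<Longrightarrow> G P Q = G Q P"
  shows "\<exists>d x M. (\<forall>P\<in>Pts. in_Rd d (x P)) \<and> inj_on x Pts \<and>
     (\<forall>P\<in>Pts. \<forall>Q\<in>Pts. P\<noteq>Q \<longrightarrow> inner_Rd d (x P) (x Q) = G P Q) \<and>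
     (\<forall>P\<in>Pts. inner_Rd d (x P) (x P) = M)"
proof -
  obtain d u where du: "\<forall>P\<in>Pts. in_Rd d (u P)"
      "\<forall>P\<in>Pts. \<forall>Q\<in>Pts. P\<noteq>Q \<longrightarrow> inner_Rd d (u P) (u Q) = G P Q"
    using stepA[where G=G, OF fin symG] by blast
  obtain \<iota> :: "'p \<Rightarrow> nat" where bij: "bij_betw \<iota> Pts {0..<card Pts}"
    using ex_bij_betw_finite_nat[OF fin] by blast
  then have inj: "inj_on \<iota> Pts" and rng: "\<And>P. P \<in> Pts \<Longrightarrow> \<iota> P < card Pts"
    by (auto simp: bij_betw_def)
  define n where "n = card Pts"
  define M where "M = 1 + (\<Sum>P\<in>Pts. inner_Rd d (u P) (u P))"
  define s where "s P = sqrt (M - inner_Rd d (u P) (u P))" for P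
  have spos: "s P > 0" if "P \<in> Pts" for P
  proof -
    have "inner_Rd d (u P) (u P) \<le> (\<Sum>P\<in>Pts. inner_Rd d (u P) (u P))"
      using fin that by (intro member_le_sum inner_self_nonneg) auto
    then show ?thesis unfolding s_def M_def by simp
  qed
  have ssq: "s P * s P = M - inner_Rd d (u P) (u P)" if "P \<in> Pts" for P
  proof -
    have "inner_Rd d (u P) (u P) \<le> (\<Sum>P\<in>Pts. inner_Rd d (u P) (u P))"
      using fin that by (intro member_le_sum inner_self_nonneg) auto
    then show ?thesis unfolding s_def M_def by simp
  qed
  define x where "x P k = (if k < d then u P k else if k = d + \<iota> P then s P else 0)" for P k
  have inRd: "in_Rd (d + n) (x P)" if "P \<in> Pts" for P
    unfolding in_Rd_def x_def using rng[OF that] n_def by auto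
  have split: "inner_Rd (d + n) (x P) (x Q) = inner_Rd d (u P) (u Q) +
      (if \<iota> P = \<iota> Q then s P * s Q else 0)" if "P \<in> Pts" "Q \<in> Pts" for P Q
  proof -
    have un: "{..<d+n} = {..<d} \<union> {d..<d+n}" by auto
    have "inner_Rd (d + n) (x P) (x Q) = (\<Sum>k<d. x P k * x Q k) + (\<Sum>k\<in>{d..<d+n}. x P k * x Q k)"
      unfolding inner_Rd_def un by (rule sum.union_disjoint) auto
    moreover have "(\<Sum>k<d. x P k * x Q k) = inner_Rd d (u P) (u Q)"
      unfolding inner_Rd_def x_def by simp
    moreover have "(\<Sum>k\<in>{d..<d+n}. x P k * x Q k) =
        (\<Sum>k\<in>{d..<d+n}. if k = d + \<iota> P then (if \<iota> P = \<iota> Q then s P * s Q else 0) else 0)"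
      by (rule sum.cong) (auto simp: x_def)
    moreover have "\<dots> = (if \<iota> P = \<iota> Q then s P * s Q else 0)"
      using rng[OF that(1)] n_def by simp
    ultimately show ?thesis by simp
  qed
  have "inj_on x Pts"
  proof (rule inj_onI)
    fix P Q assume h: "P \<in> Pts" "Q \<in> Pts" "x P = x Q"
    then have "x P (d + \<iota> P) = x Q (d + \<iota> P)" by simp
    then have "\<iota> P = \<iota> Q" using spos[OF h(1)] unfolding x_def by (auto split: if_splits)
    then show "P = Q" using inj h by (meson inj_on_eq_iff)
  qed
  moreover have "inner_Rd (d+n) (x P) (x Q) = G P Q" if "P\<in>Pts" "Q\<in>Pts" "P\<noteq>Q" for P Q
  proof -
    have "\<iota> P \<noteq> \<iota> Q" using inj that by (meson inj_on_eq_iff)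
    then show ?thesis using split[OF that(1,2)] du that by simp
  qed
  moreover have "inner_Rd (d+n) (x P) (x P) = M" if "P\<in>Pts" for P
    using split[OF that that] ssq[OF that] by simp
  ultimately show ?thesis using inRd by blast
qed



lemma codes:
  fixes Pts :: "'p set" and C :: "'p \<Rightarrow> 'p \<Rightarrow> 'e"
  assumes fin: "finite Pts"
  shows "\<exists>(\<kappa> :: 'e \<Rightarrow> nat) N. inj_on \<kappa> {C P Q | P Q. P \<in> Pts \<and> Q \<in> Pts \<and> P \<noteq> Q} \<and>
     (\<forall>t \<in> {C P Q | P Q. P \<in> Pts \<and> Q \<in> Pts \<and> P \<noteq> Q}. \<kappa> t < N)"
proof -
  let ?Cs = "{C P Q | P Q. P \<in> Pts \<and> Q \<in> Pts \<and> P \<noteq> Q}"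
  have "?Cs \<subseteq> (\<lambda>(P,Q). C P Q) ` (Pts \<times> Pts)" by auto
  then have "finite ?Cs" using fin by (meson finite_SigmaI finite_imageI finite_subset)
  then obtain \<kappa> where b: "bij_betw \<kappa> ?Cs {0..<card ?Cs}" using ex_bij_betw_finite_nat by blast
  then have "\<forall>t\<in>?Cs. \<kappa> t < card ?Cs" using bij_betw_apply by fastforce
  then show ?thesis using b unfolding bij_betw_def by blast
qed

lemma dist_inner: "dist_Rd d x y = sqrt (inner_Rd d x x + inner_Rd d y y - 2 * inner_Rd d x y)"
proof -
  have "(\<Sum>i<d. (x i - y i)^2) = (\<Sum>i<d. x i * x i + y i * y i - 2 * (x i * y i))"
    by (rule sum.cong) (auto simp: power2_eq_square algebra_simps)
  also have "\<dots> = inner_Rd d x x + inner_Rd d y y - 2 * inner_Rd d x y"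
    unfolding inner_Rd_def by (simp add: sum.distrib sum_subtractf sum_distrib_left)
  finally show ?thesis unfolding dist_Rd_def by simp
qed

lemma part23:
  fixes Pts :: "'p set" and C :: "'p \<Rightarrow> 'p \<Rightarrow> 'e"
  assumes cg: "is_cograph Pts C" and fin: "finite Pts"
  shows "(\<exists>d (V :: (nat \<Rightarrow> real) set). (\<forall>v\<in>V. in_Rd d v) \<and>
              cograph_equiv Pts C V (inner_Rd d))
     \<and> (\<exists>d (V :: (nat \<Rightarrow> real) set). (\<forall>v\<in>V. in_Rd d v) \<and>
              cograph_equiv Pts C V (dist_Rd d))"
proof -
  let ?Cs = "{C P Q | P Q. P \<in> Pts \<and> Q \<in> Pts \<and> P \<noteq> Q}"
  obtain \<kappa> :: "'e \<Rightarrow> nat" and N where \<kappa>: "inj_on \<kappa> ?Cs"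
    using codes[OF fin, of C] by blast
  have symC: "\<And>P Q. P\<in>Pts \<Longrightarrow> Q\<in>Pts \<Longrightarrow> P\<noteq>Q \<Longrightarrow> C P Q = C Q P"
    using cg unfolding is_cograph_def by blast
  define G where "G P Q = real (\<kappa> (C P Q))" for P Q
  have symG: "\<And>P Q. P\<in>Pts \<Longrightarrow> Q\<in>Pts \<Longrightarrow> P\<noteq>Q \<Longrightarrow> G P Q = G Q P"
    unfolding G_def using symC by simp
  obtain d x M where x: "\<forall>P\<in>Pts. in_Rd d (x P)" "inj_on x Pts"
     "\<forall>P\<in>Pts. \<forall>Q\<in>Pts. P\<noteq>Q \<longrightarrow> inner_Rd d (x P) (x Q) = G P Q"
     "\<forall>P\<in>Pts. inner_Rd d (x P) (x P) = M"
    using stepB[where G=G, OF fin symG] by blast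
  have bij: "bij_betw x Pts (x ` Pts)" using x(2) by (simp add: bij_betw_def)
  have V: "\<forall>v\<in>x ` Pts. in_Rd d v" using x(1) by blast
  have "cograph_equiv Pts C (x ` Pts) (inner_Rd d)"
  proof (rule equiv_code[OF bij, where c="\<lambda>t. real (\<kappa> t)"])
    show "inj_on (\<lambda>t. real (\<kappa> t)) ?Cs" using \<kappa> unfolding inj_on_def by simp
    show "\<And>P Q. P \<in> Pts \<Longrightarrow> Q \<in> Pts \<Longrightarrow> P \<noteq> Q \<Longrightarrow> inner_Rd d (x P) (x Q) = real (\<kappa> (C P Q))"
      using x(3) unfolding G_def by simp
  qed
  moreover have "cograph_equiv Pts C (x ` Pts) (dist_Rd d)"
  proof (rule equiv_code[OF bij, where c="\<lambda>t. sqrt (M + M - 2 * real (\<kappa> t))"])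
    show "inj_on (\<lambda>t. sqrt (M + M - 2 * real (\<kappa> t))) ?Cs" using \<kappa> unfolding inj_on_def by simp
    show "\<And>P Q. P \<in> Pts \<Longrightarrow> Q \<in> Pts \<Longrightarrow> P \<noteq> Q \<Longrightarrow> dist_Rd d (x P) (x Q) = sqrt (M + M - 2 * real (\<kappa> (C P Q)))"
      using x(3,4) unfolding G_def dist_inner by simp
  qed
  ultimately show ?thesis using V by blast
qed



lemma fermat_int:
  fixes p :: nat and a :: int
  assumes p: "prime p" and nd: "\<not> int p dvd a"
  shows "a ^ (p - 1) mod int p = 1"
proof -
  define b where "b = nat (a mod int p)"
  have p1: "p > 1" using p prime_gt_1_nat by blast
  have bi: "int b = a mod int p" unfolding b_def using p1 by simp
  have "\<not> p dvd b"
  proof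
    assume "p dvd b"
    then have "int p dvd int b" by simp
    then have "int p dvd a mod int p" using bi by simp
    then show False using nd by (simp add: dvd_mod_iff)
  qed
  then have "[b ^ (p - 1) = 1] (mod p)" using fermat_theorem p by blast
  then have "b ^ (p - 1) mod p = 1" using p1 by (simp add: cong_def)
  then have "int (b ^ (p - 1) mod p) = 1" by simp
  then have "(int b) ^ (p - 1) mod int p = 1" by (simp add: of_nat_mod)
  then show ?thesis using bi by (simp add: power_mod)
qed



lemma part2b:
  fixes Pts :: "'p set" and C :: "'p \<Rightarrow> 'p \<Rightarrow> 'e"
  assumes cg: "is_cograph Pts C" and fin: "finite Pts"
  shows "\<exists>a n. symmetric_coeffs a \<and>
             ((\<exists>V :: int set. cograph_equiv Pts C V (poly2 a n)) \<or>
              (\<exists>(m::int) (V :: int set). m > 0 \<and> V \<subseteq> {0..<m} \<and>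
                  cograph_equiv Pts C V (\<lambda>x y. poly2 a n x y mod m)))"
proof -
  let ?Cs = "{C P Q | P Q. P \<in> Pts \<and> Q \<in> Pts \<and> P \<noteq> Q}"
  obtain \<kappa> :: "'e \<Rightarrow> nat" and N where \<kappa>: "inj_on \<kappa> ?Cs" "\<forall>t\<in>?Cs. \<kappa> t < N"
    using codes[OF fin, of C] by blast
  have symC: "\<And>P Q. P\<in>Pts \<Longrightarrow> Q\<in>Pts \<Longrightarrow> P\<noteq>Q \<Longrightarrow> C P Q = C Q P"
    using cg unfolding is_cograph_def by blast
  obtain B where B: "finite B" "card B = card Pts" "B \<subseteq> {p::nat. prime p}"
    using infinite_arbitrarily_large[OF primes_infinite] by blast
  obtain x where bx: "bij_betw x Pts B" using finite_same_card_bij[OF fin B(1) B(2)[symmetric]] by blast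
  have xprime: "prime (x P)" if "P \<in> Pts" for P 
  proof -
    have "x P \<in> B" by (rule bij_betw_apply[OF bx that])
    then show ?thesis using B(3) by blast
  qed
  have injx: "inj_on x Pts" using bx by (simp add: bij_betw_def)
  define Mx where "Mx = Max (insert 0 (x ` Pts))"
  have xle: "x P \<le> Mx" if "P \<in> Pts" for P unfolding Mx_def using fin that by (intro Max_ge) auto
  obtain p where p: "prime p" "2*N + Mx*Mx + Mx < p" using bigger_prime by blast
  have p1: "p > 1" using p prime_gt_1_nat by blast
  define X where "X P = int (x P)" for P
  define s where "s q = X (fst q) * X (snd q)" for q
  define c where "c q = int (\<kappa> (C (fst q) (snd q)))" for q
  define Pr where "Pr = {(R,S). R\<in>Pts \<and> S\<in>Pts \<and> R\<noteq>S}"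
  have finPr: "finite Pr" unfolding Pr_def
    by (rule finite_subset[of _ "Pts \<times> Pts"]) (use fin in auto)
  define F :: "int poly" where "F = (\<Sum>q\<in>Pr. smult (c q) (1 - [:- s q, 1:] ^ (p - 1)))"
  define n where "n = degree F"
  define a where "a i j = (if i = j then coeff F i else 0)" for i j
  have polyF: "poly F t = (\<Sum>q\<in>Pr. c q * (1 - (t - s q) ^ (p - 1)))" for t
    unfolding F_def by (simp add: poly_sum)
  have poly2eq: "poly2 a n y z = poly F (y * z)" for y z
  proof -
    have "poly2 a n y z = (\<Sum>i\<le>n. coeff F i * (y * z) ^ i)"
      unfolding poly2_def
    proof (rule sum.cong)
      fix i assume "i \<in> {..n}"
      have "(\<Sum>j\<le>n. a i j * y ^ i * z ^ j) = (\<Sum>j\<le>n. if j = i then coeff F i * (y * z) ^ i else 0)"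
        by (rule sum.cong) (auto simp: a_def power_mult_distrib)
      also have "\<dots> = coeff F i * (y * z) ^ i" using \<open>i \<in> {..n}\<close> by simp
      finally show "(\<Sum>j\<le>n. a i j * y ^ i * z ^ j) = coeff F i * (y * z) ^ i" .
    qed simp
    then show ?thesis unfolding n_def by (simp add: poly_altdef)
  qed
  have primelem: "(R = P \<and> S = Q) \<or> (R = Q \<and> S = P)"
    if h: "R\<in>Pts" "S\<in>Pts" "P\<in>Pts" "Q\<in>Pts" "x R * x S = x P * x Q" for R S P Q
  proof -
    have "x R dvd x P * x Q" using h(5) by (metis dvd_triv_left)
    then have "x R dvd x P \<or> x R dvd x Q" using xprime[OF h(1)] prime_dvd_mult_iff by blast
    then have "x R = x P \<or> x R = x Q" using xprime h primes_dvd_imp_eq by blast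
    then have "R = P \<or> R = Q" using injx h by (meson inj_on_eq_iff)
    moreover have "x R > 0" using xprime[OF h(1)] prime_gt_0_nat by blast
    ultimately show ?thesis using h injx
      by (metis (no_types, lifting) inj_on_eq_iff mult.commute mult_left_cancel not_gr_zero)
  qed
  have sbound: "0 \<le> s q \<and> s q < int p" if "q \<in> Pr" for q
  proof -
    have "x (fst q) \<le> Mx" "x (snd q) \<le> Mx" using that xle unfolding Pr_def by auto
    then have "x (fst q) * x (snd q) \<le> Mx * Mx" by (simp add: mult_le_mono)
    then have "x (fst q) * x (snd q) < p" using p by linarith
    then show ?thesis unfolding s_def X_def
      by (metis of_nat_0_le_iff of_nat_less_iff of_nat_mult)
  qed
  have main: "poly F (s (P,Q)) mod int p = 2 * c (P,Q)" if PQ: "P\<in>Pts" "Q\<in>Pts" "P\<noteq>Q" for P Q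
  proof -
    define t where "t = s (P,Q)"
    have tPr: "(P,Q) \<in> Pr" using PQ unfolding Pr_def by simp
    have termq: "(c q * (1 - (t - s q) ^ (p - 1))) mod int p = (if s q = t then c q else 0) mod int p"
      if q: "q \<in> Pr" for q
    proof (cases "s q = t")
      case True then show ?thesis using p1 by (simp add: power_0_left)
    next
      case False
      have nd: "\<not> int p dvd (t - s q)"
      proof
        assume "int p dvd (t - s q)"
        then have "\<bar>int p\<bar> \<le> \<bar>t - s q\<bar>" using False by (intro dvd_imp_le_int) auto
        then show False using sbound[OF q] sbound[OF tPr] unfolding t_def by linarith
      qed
      have "(t - s q) ^ (p - 1) mod int p = 1 mod int p"
        using fermat_int[OF p(1) nd] p1 by simp
      then have "int p dvd (t - s q) ^ (p - 1) - 1" by (simp add: mod_eq_dvd_iff)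
      then have "int p dvd c q * (1 - (t - s q) ^ (p - 1))"
        by (metis dvd_minus_iff dvd_mult minus_diff_eq)
      then show ?thesis using False by simp
    qed
    have filt: "{q\<in>Pr. s q = t} = {(P,Q),(Q,P)}"
    proof
      show "{q\<in>Pr. s q = t} \<subseteq> {(P,Q),(Q,P)}"
      proof
        fix q assume "q \<in> {q\<in>Pr. s q = t}"
        then obtain R S where q: "q = (R,S)" "R\<in>Pts" "S\<in>Pts" "X R * X S = X P * X Q"
          unfolding Pr_def s_def t_def by auto
        then have "x R * x S = x P * x Q" unfolding X_def by (metis of_nat_eq_iff of_nat_mult)
        then show "q \<in> {(P,Q),(Q,P)}" using primelem[OF q(2,3) PQ(1,2)] q(1) by auto
      qed
      show "{(P,Q),(Q,P)} \<subseteq> {q\<in>Pr. s q = t}"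
        using PQ unfolding Pr_def s_def t_def by auto
    qed
    have "poly F t mod int p = (\<Sum>q\<in>Pr. (c q * (1 - (t - s q) ^ (p - 1))) mod int p) mod int p"
      unfolding polyF by (simp add: mod_sum_eq)
    also have "\<dots> = (\<Sum>q\<in>Pr. (if s q = t then c q else 0) mod int p) mod int p"
      using termq by simp
    also have "\<dots> = (\<Sum>q\<in>Pr. (if s q = t then c q else 0)) mod int p"
      by (simp add: mod_sum_eq)
    also have "(\<Sum>q\<in>Pr. (if s q = t then c q else 0)) = (\<Sum>q\<in>{q\<in>Pr. s q = t}. c q)"
      using finPr by (simp add: sum.inter_filter)
    also have "\<dots> = c (P,Q) + c (Q,P)" unfolding filt using PQ by simp
    also have "\<dots> = 2 * c (P,Q)" unfolding c_def using symC[OF PQ] by simp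
    also have "\<dots> mod int p = 2 * c (P,Q)"
    proof -
      have "\<kappa> (C P Q) < N" using \<kappa>(2) PQ by blast
      then have "2 * \<kappa> (C P Q) < p" using p by linarith
      then have "int (2 * \<kappa> (C P Q)) < int p" by (simp only: of_nat_less_iff)
      then have "2 * c (P,Q) < int p" unfolding c_def by simp
      then show ?thesis unfolding c_def by simp
    qed
    finally show ?thesis unfolding t_def .
  qed
  have injX: "inj_on X Pts" using injx unfolding X_def inj_on_def by simp
  have Vsub: "X ` Pts \<subseteq> {0..<int p}"
  proof
    fix v assume "v \<in> X ` Pts"
    then obtain P where "P \<in> Pts" "v = X P" by blast
    then show "v \<in> {0..<int p}" using xle[of P] p unfolding X_def by auto
  qed
  have "cograph_equiv Pts C (X ` Pts) (\<lambda>y z. poly2 a n y z mod int p)"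
  proof (rule equiv_code[where c="\<lambda>t. 2 * int (\<kappa> t)"])
    show "bij_betw X Pts (X ` Pts)" using injX by (simp add: bij_betw_def)
    show "inj_on (\<lambda>t. 2 * int (\<kappa> t)) ?Cs" using \<kappa>(1) unfolding inj_on_def by simp
    fix P Q assume "P \<in> Pts" "Q \<in> Pts" "P \<noteq> Q"
    then show "poly2 a n (X P) (X Q) mod int p = 2 * int (\<kappa> (C P Q))"
      using main[of P Q] unfolding poly2eq s_def c_def by simp
  qed
  moreover have "symmetric_coeffs a" unfolding symmetric_coeffs_def a_def by auto
  ultimately show ?thesis using Vsub p1 by (metis of_nat_0_less_iff less_trans zero_less_one)
qed


theorem theorem1p1:
  fixes Pts :: "'p set" and C :: "'p \<Rightarrow> 'p \<Rightarrow> 'e"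
  assumes "is_cograph Pts C"
  shows
    "(\<exists>(V :: 'p set set set) (S :: 'p set set set).
        fat_intersection_system V S \<and> cograph_equiv Pts C V (fat_edge S))
     \<and> (finite Pts \<longrightarrow>
          (\<exists>d (V :: (nat \<Rightarrow> real) set). (\<forall>v\<in>V. in_Rd d v) \<and>
              cograph_equiv Pts C V (inner_Rd d)))
     \<and> (finite Pts \<longrightarrow>
          (\<exists>a n. symmetric_coeffs a \<and>
             ((\<exists>V :: int set. cograph_equiv Pts C V (poly2 a n)) \<or>
              (\<exists>(m::int) (V :: int set). m > 0 \<and> V \<subseteq> {0..<m} \<and>
                  cograph_equiv Pts C V (\<lambda>x y. poly2 a n x y mod m)))))
     \<and> (finite Pts \<longrightarrow>
          (\<exists>d (V :: (nat \<Rightarrow> real) set). (\<forall>v\<in>V. in_Rd d v) \<and>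
              cograph_equiv Pts C V (dist_Rd d)))"
  using part1[OF assms] part23[OF assms] part2b[OF assms] by blast

end
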